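(* Let $\mathcal{G}$ be a Kripke structure (viewed as a one-agent concurrent game structure) and let $\forall\pi_1.\cdots\forall\pi_n.\mathbf{E}.\varphi$ be an $\texttt{AHLTL}$ formula, with $\varphi$ quantifier-free over path variables $\pi_1,\dots,\pi_n$. Consider the statements (1) $\mathcal{G}_{\mathit{stut}}\models[\langle\langle\{\mathit{sched}\}\rangle\rangle\pi_1.\cdots\langle\langle\{\mathit{sched}\}\rangle\rangle\pi_n.]\,\big(\varphi\wedge\bigwedge_{i=1}^n\mathit{fair}_{\pi_i}\big)$, where $\mathit{fair}_{\pi_i}:=\square\lozenge\neg\mathit{stut}_{\pi_i}$; (2) $\mathcal{G}\models_{\texttt{AHLTL}}\forall\pi_1.\cdots\forall\pi_n.\mathbf{E}.\varphi$. Then (1) implies (2). If moreover $\varphi$ is an admissible formula, then (1) and (2) are equivalent.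
   Context: A multi-stage concurrent game structure (MSCGS) is a tuple $\mathcal{G}=(S,s_0,\Xi,\mathscr{M},\delta,d,\mathbf{AP},\ell)$ with finite state set $S$, initial state $s_0$, finite agent set $\Xi$, finite move set $\mathscr{M}$, transition function $\delta:S\times(\Xi\to\mathscr{M})\to S$, stage function $d:\Xi\to\mathbb{N}$, atomic propositions $\mathbf{AP}$, labelling $\ell:S\to2^{\mathbf{AP}}$. A Kripke structure $(S,s_0,\to,\mathbf{AP},\ell)$ is viewed as the MSCGS with a single agent (stage $0$) whose moves choose the $\to$-successor; its paths are the sequences $s_0s_1\cdots$ with $s_i\to s_{i+1}$. Stutter version: for an MSCGS $\mathcal{G}$ and a fresh agent $\mathit{sched}\notin\Xi$, $\mathcal{G}_{\mathit{stut}}=(S\times\{0,1\},(s_0,0),\Xi\uplus\{\mathit{sched}\},\mathscr{M}\times\{0,1\},\delta',d',\mathbf{AP}\uplus\{\mathit{stut}\},\ell')$ where $\delta'((s,b),\sigma)=(\delta(s,\mathit{proj}_1\circ\sigma_{\mid\Xi}),0)$ if $(\mathit{proj}_2\circ\sigma)(\mathit{sched})=0$ and $\delta'((s,b),\sigma)=(s,1)$ if $(\mathit{proj}_2\circ\sigma)(\mathit{sched})=1$; $\ell'((s,0))=\ell(s)$, $\ell'((s,1))=\ell(s)\cup\{\mathit{stut}\}$; $d'(\xi)=d(\xi)$ for $\xi\in\Xi$ and $d'(\mathit{sched})=m+1$ with $m$ the maximal value of $d$. $\texttt{HyperATL}^*$ semantics of a quantifier block on an MSCGS, evaluated from the empty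 assignment: a strategy for agent $\xi$ in copy $j$ maps a finite history in $(S^n)^+$ (states of all $n$ copies) together with the moves already fixed for all agents of stage $<d(\xi)$ in all $n$ copies to a move. An outcome is $u\in(S^n)^\omega$ with $u(0)=(s_0,\dots,s_0)$ such that for every $i$ there are global move vectors $\sigma_1,\dots,\sigma_n$ with $u(i+1)_j=\delta(u(i)_j,\sigma_j)$ and $\sigma_j(\xi)$ given by the strategy of $\xi$ in copy $j$ for every controlled agent $\xi$. The block $[\langle\langle A_1\rangle\rangle\pi_1.\cdots\langle\langle A_n\rangle\rangle\pi_n.]\psi$ holds iff there exist strategies for all controlled agents such that every outcome $(t_1,\dots,t_n)$ satisfies $\psi$ under $\pi_j\mapsto t_j$, where quantifier-free $\psi$ is evaluated as synchronous LTL with $a_{\pi}$ meaning $a$ holds in the current state of the path bound to $\pi$. $\texttt{AHLTL}$ semantics: $\mathcal{G}\models_{\texttt{AHLTL}}\forall\pi_1.\cdots\forall\pi_n.\mathbf{E}.\varphi$ iff for all paths $t_1,\dots,t_n$ of $\mathcal{G}$ there is a fair trajectory such that the stuttered paths satisfy $\varphi$. A trajectory is a sequence $\tau\in(2^{\{\pi_1,\dots,\pi_n\}})^\omega$ (the set of paths that progress at each step); it is fair if every $\pi_i$ belongs to $\tau(m)$ for infinitely many $m$. With $p_i(m)=|\{m'<m\mid\pi_i\in\tau(m')\}|$, the stuttered path for $\pi_i$ is $t_i(p_i(0))t_i(p_i(1))\cdots$, and $\varphi$ is evaluated synchronously (as LTL over indexed propositions) on the stuttered paths. An admissible formula is a conjunction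 of formulas of the form $\square\bigwedge_{a\in P}(a_{\pi_i}\leftrightarrow a_{\pi_j})$ ($P$ a set of atomic propositions) and of stutter-invariant LTL formulas over a single path variable (formulas whose truth value is unchanged when passing to a stutter-equivalent trace). *)

theory Defs
  imports Main
begin

text \<open>Path variables pi_1 .. pi_n are represented by the indices 0 .. n-1.
  Prop a j stands for a_{pi_(j+1)}.\<close>

datatype 'a hltl =
    HTrue
  | Prop 'a nat
  | Not "'a hltl"
  | And "'a hltl" "'a hltl"
  | Next "'a hltl"
  | Until "'a hltl" "'a hltl"

definition Or :: "'a hltl \<Rightarrow> 'a hltl \<Rightarrow> 'a hltl" where
  "Or p q = Not (And (Not p) (Not q))"

definition Iff :: "'a hltl \<Rightarrow> 'a hltl \<Rightarrow> 'a hltl" where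
  "Iff p q = And (Or (Not p) q) (Or (Not q) p)"

definition Ev :: "'a hltl \<Rightarrow> 'a hltl" where
  "Ev p = Until HTrue p"

definition Glob :: "'a hltl \<Rightarrow> 'a hltl" where
  "Glob p = Not (Ev (Not p))"

fun conj_list :: "'a hltl list \<Rightarrow> 'a hltl" where
  "conj_list [] = HTrue"
| "conj_list [p] = p"
| "conj_list (p # ps) = And p (conj_list ps)"

fun vars :: "'a hltl \<Rightarrow> nat set" where
  "vars HTrue = {}"
| "vars (Prop a j) = {j}"
| "vars (Not p) = vars p"
| "vars (And p q) = vars p \<union> vars q"
| "vars (Next p) = vars p"
| "vars (Until p q) = vars p \<union> vars q"

text \<open>Semantics: w j i is the label (set of atomic propositions) of the path bound to
  variable j at position i.\<close>

fun hsat :: "(nat \<Rightarrow> nat \<Rightarrow> 'a set) \<Rightarrow> nat \<Rightarrow> 'a hltl \<Rightarrow> bool" where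
  "hsat w i HTrue = True"
| "hsat w i (Prop a j) = (a \<in> w j i)"
| "hsat w i (Not p) = (\<not> hsat w i p)"
| "hsat w i (And p q) = (hsat w i p \<and> hsat w i q)"
| "hsat w i (Next p) = hsat w (Suc i) p"
| "hsat w i (Until p q) = (\<exists>k\<ge>i. hsat w k q \<and> (\<forall>l. i \<le> l \<and> l < k \<longrightarrow> hsat w l p))"

record ('s, 'ag, 'm, 'ap) mscgs =
  states :: "'s set"
  init   :: 's
  agents :: "'ag set"
  moves  :: "'m set"
  delta  :: "'s \<Rightarrow> ('ag \<Rightarrow> 'm) \<Rightarrow> 's"
  stage  :: "'ag \<Rightarrow> nat"
  lab    :: "'s \<Rightarrow> 'ap set"

text \<open>A strategy for agent xi (in some copy) for a block with n copies: it maps a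
  finite non-empty history of n-tuples of states (each tuple a list of length n) together
  with the move vectors of all n copies to a move, and depends on the move vectors only
  through the moves of agents of stage strictly smaller than the stage of xi.\<close>

definition is_strategy ::
  "('s, 'ag, 'm, 'ap) mscgs \<Rightarrow> nat \<Rightarrow> 'ag \<Rightarrow> ('s list list \<Rightarrow> ('ag \<Rightarrow> 'm) list \<Rightarrow> 'm) \<Rightarrow> bool" where
  "is_strategy G n xi f \<longleftrightarrow>
     (\<forall>h sig. f h sig \<in> moves G) \<and>
     (\<forall>h sig sig'. length sig = n \<longrightarrow> length sig' = n \<longrightarrow>
        (\<forall>j<n. \<forall>xi'\<in>agents G. stage G xi' < stage G xi \<longrightarrow> (sig ! j) xi' = (sig' ! j) xi') \<longrightarrow>
        f h sig = f h sig')"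

text \<open>Outcomes of a block with controlled-agent sets As (As ! j for copy j) under the
  strategy family str (str j xi = strategy of agent xi in copy j).\<close>

definition is_outcome ::
  "('s, 'ag, 'm, 'ap) mscgs \<Rightarrow> 'ag set list \<Rightarrow> (nat \<Rightarrow> 'ag \<Rightarrow> ('s list list \<Rightarrow> ('ag \<Rightarrow> 'm) list \<Rightarrow> 'm))
     \<Rightarrow> (nat \<Rightarrow> 's list) \<Rightarrow> bool" where
  "is_outcome G As str u \<longleftrightarrow>
     (let n = length As in
       u 0 = replicate n (init G) \<and>
       (\<forall>i. length (u (Suc i)) = n \<and>
          (\<exists>sig. length sig = n \<and>
             (\<forall>j<n. \<forall>xi\<in>agents G. (sig ! j) xi \<in> moves G) \<and>
             (\<forall>j<n. u (Suc i) ! j = delta G (u i ! j) (sig ! j)) \<and>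
             (\<forall>j<n. \<forall>xi\<in>As ! j. (sig ! j) xi = str j xi (map u [0..<Suc i]) sig))))"

text \<open>HyperATL* semantics of the quantifier block
  [<<As!0>> pi_1. ... <<As!(n-1)>> pi_n.] psi, evaluated from the empty assignment.\<close>

definition hyperatl_block :: "('s, 'ag, 'm, 'ap) mscgs \<Rightarrow> 'ag set list \<Rightarrow> 'ap hltl \<Rightarrow> bool" where
  "hyperatl_block G As psi \<longleftrightarrow>
     (\<exists>str. (\<forall>j<length As. \<forall>xi\<in>As ! j. is_strategy G (length As) xi (str j xi)) \<and>
       (\<forall>u. is_outcome G As str u \<longrightarrow> hsat (\<lambda>j i. lab G (u i ! j)) 0 psi))"

text \<open>Agent sched = None, agent xi = Some xi; proposition stut = None, a = Some a;
  the bit 0/1 is False/True.\<close>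

definition stut :: "('s, 'ag, 'm, 'ap) mscgs \<Rightarrow> ('s \<times> bool, 'ag option, 'm \<times> bool, 'ap option) mscgs" where
  "stut G =
    \<lparr> states = states G \<times> UNIV,
      init = (init G, False),
      agents = Some ` agents G \<union> {None},
      moves = moves G \<times> UNIV,
      delta = (\<lambda>(s, b) sig. if snd (sig None) then (s, True)
                            else (delta G s (\<lambda>xi. fst (sig (Some xi))), False)),
      stage = (\<lambda>a. case a of None \<Rightarrow> Max (stage G ` agents G) + 1 | Some xi \<Rightarrow> stage G xi),
      lab = (\<lambda>(s, b). Some ` lab G s \<union> (if b then {None} else {})) \<rparr>"

record ('s, 'ap) kripke =
  kstates :: "'s set"
  kinit   :: 's
  krel    :: "'s \<Rightarrow> 's \<Rightarrow> bool"
  klab    :: "'s \<Rightarrow> 'ap set"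

definition kripke_wf :: "('s, 'ap) kripke \<Rightarrow> bool" where
  "kripke_wf K \<longleftrightarrow> finite (kstates K) \<and> kinit K \<in> kstates K \<and>
     (\<forall>s t. krel K s t \<longrightarrow> s \<in> kstates K \<and> t \<in> kstates K) \<and>
     (\<forall>s\<in>kstates K. \<exists>t. krel K s t)"

text \<open>The Kripke structure as a one-agent MSCGS (the single agent, of stage 0, chooses the
  successor; a move that is not a successor is treated as some fixed successor).\<close>

definition kripke_mscgs :: "('s, 'ap) kripke \<Rightarrow> ('s, unit, 's, 'ap) mscgs" where
  "kripke_mscgs K =
    \<lparr> states = kstates K, init = kinit K, agents = UNIV, moves = kstates K,
      delta = (\<lambda>s sig. if krel K s (sig ()) then sig () else (SOME t. krel K s t)),
      stage = (\<lambda>_. 0), lab = klab K \<rparr>"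

definition kpath :: "('s, 'ap) kripke \<Rightarrow> (nat \<Rightarrow> 's) \<Rightarrow> bool" where
  "kpath K t \<longleftrightarrow> t 0 = kinit K \<and> (\<forall>i. krel K (t i) (t (Suc i)))"

definition progress :: "(nat \<Rightarrow> nat set) \<Rightarrow> nat \<Rightarrow> nat \<Rightarrow> nat" where
  "progress tau j m = card {m'. m' < m \<and> j \<in> tau m'}"

definition fair_traj :: "nat \<Rightarrow> (nat \<Rightarrow> nat set) \<Rightarrow> bool" where
  "fair_traj n tau \<longleftrightarrow> (\<forall>m. tau m \<subseteq> {..<n}) \<and> (\<forall>j<n. \<exists>\<^sub>\<infinity>m. j \<in> tau m)"

definition ahltl_sat :: "('s, 'ap) kripke \<Rightarrow> nat \<Rightarrow> 'ap hltl \<Rightarrow> bool" where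
  "ahltl_sat K n phi \<longleftrightarrow>
     (\<forall>ts. length ts = n \<longrightarrow> (\<forall>j<n. kpath K (ts ! j)) \<longrightarrow>
        (\<exists>tau. fair_traj n tau \<and>
           hsat (\<lambda>j m. klab K ((ts ! j) (progress tau j m))) 0 phi))"

definition stutter_equiv :: "(nat \<Rightarrow> 'a) \<Rightarrow> (nat \<Rightarrow> 'a) \<Rightarrow> bool" where
  "stutter_equiv v w \<longleftrightarrow>
     (\<exists>f g :: nat \<Rightarrow> nat. strict_mono f \<and> strict_mono g \<and> f 0 = 0 \<and> g 0 = 0 \<and>
        (\<forall>k. (\<forall>i. f k \<le> i \<and> i < f (Suc k) \<longrightarrow> v i = v (f k)) \<and>
             (\<forall>i. g k \<le> i \<and> i < g (Suc k) \<longrightarrow> w i = w (g k)) \<and>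
             v (f k) = w (g k)))"

definition eq_formula :: "'a hltl \<Rightarrow> bool" where
  "eq_formula c \<longleftrightarrow>
     (\<exists>as i j. c = Glob (conj_list (map (\<lambda>a. Iff (Prop a i) (Prop a j)) as)))"

definition stutter_inv_single :: "'a hltl \<Rightarrow> bool" where
  "stutter_inv_single c \<longleftrightarrow>
     (\<exists>k. vars c \<subseteq> {k} \<and>
        (\<forall>w w'. stutter_equiv (w k) (w' k) \<longrightarrow> (hsat w 0 c \<longleftrightarrow> hsat w' 0 c)))"

definition admissible :: "'a hltl \<Rightarrow> bool" where
  "admissible phi \<longleftrightarrow>
     (\<exists>cs. cs \<noteq> [] \<and> phi = conj_list cs \<and>
        (\<forall>c\<in>set cs. eq_formula c \<or> stutter_inv_single c))"

definition fair_formula :: "nat \<Rightarrow> 'a option hltl" where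
  "fair_formula j = Glob (Ev (Not (Prop None j)))"

end

theory Submission
  imports Defs "HOL-Library.Infinite_Set"
begin

lemma hsat_map: "hsat w i (map_hltl f phi) = hsat (\<lambda>j k. f -` w j k) i phi"
  by (induction phi arbitrary: i) auto

lemma hsat_cong: "(\<And>j k. j \<in> vars p \<Longrightarrow> w j k = w' j k) \<Longrightarrow> hsat w i p = hsat w' i p"
  by (induction p arbitrary: i) auto

lemma hsat_conj_list: "hsat w i (conj_list cs) = (\<forall>c\<in>set cs. hsat w i c)"
  by (induction cs rule: conj_list.induct) auto

lemma vars_conj_list: "vars (conj_list cs) = (\<Union>c\<in>set cs. vars c)"
  by (induction cs rule: conj_list.induct) auto

lemma hsat_Glob: "hsat w i (Glob p) = (\<forall>k\<ge>i. hsat w k p)"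
  by (auto simp: Glob_def Ev_def)

lemma hsat_Ev: "hsat w i (Ev p) = (\<exists>k\<ge>i. hsat w k p)"
  by (auto simp: Ev_def)

lemma hsat_Iff: "hsat w i (Iff p q) = (hsat w i p \<longleftrightarrow> hsat w i q)"
  by (auto simp: Iff_def Or_def)

lemma vars_Glob: "vars (Glob p) = vars p"
  by (simp add: Glob_def Ev_def)

lemma vars_Iff: "vars (Iff p q) = vars p \<union> vars q"
  by (auto simp: Iff_def Or_def)

lemma hsat_eqf: "hsat w i (Glob (conj_list (map (\<lambda>a. Iff (Prop a x) (Prop a y)) as)))
   = (\<forall>k\<ge>i. \<forall>a\<in>set as. (a \<in> w x k \<longleftrightarrow> a \<in> w y k))"
  by (auto simp: hsat_Glob hsat_conj_list hsat_Iff)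

lemma vars_eqf: "vars (Glob (conj_list (map (\<lambda>a. Iff (Prop a x) (Prop a y)) as)))
   = (if as = [] then {} else {x, y})"
  by (auto simp: vars_Glob vars_conj_list vars_Iff)

lemma hsat_fair: "hsat w 0 (fair_formula j) = (\<forall>k. \<exists>l\<ge>k. None \<notin> w j l)"
  by (auto simp: fair_formula_def hsat_Glob hsat_Ev)

lemma hsat_fair_list: "hsat w 0 (conj_list (map fair_formula [0..<n])) = (\<forall>j<n. \<forall>k. \<exists>l\<ge>k. None \<notin> w j l)"
  by (auto simp: hsat_conj_list hsat_fair)

section \<open>Step functions\<close>

definition stepf :: "(nat \<Rightarrow> nat) \<Rightarrow> bool" where
  "stepf p \<longleftrightarrow> p 0 = 0 \<and> (\<forall>m. p (Suc m) = p m \<or> p (Suc m) = Suc (p m))"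

lemma progress_0: "progress tau j 0 = 0"
  by (simp add: progress_def)

lemma progress_Suc: "progress tau j (Suc m) = progress tau j m + (if j \<in> tau m then 1 else 0)"
proof -
  have "{m'. m' < Suc m \<and> j \<in> tau m'} = {m'. m' < m \<and> j \<in> tau m'} \<union> (if j \<in> tau m then {m} else {})"
    by (auto simp: less_Suc_eq)
  then show ?thesis by (simp add: progress_def)
qed

lemma stepf_progress: "stepf (progress tau j)"
  by (simp add: stepf_def progress_0 progress_Suc)

lemma stepf_Suc: "stepf p \<Longrightarrow> p (Suc m) = p m \<or> p (Suc m) = Suc (p m)"
  by (simp add: stepf_def)

lemma stepf_mono: "stepf p \<Longrightarrow> m \<le> m' \<Longrightarrow> p m \<le> p m'"
proof -
  assume s: "stepf p" and mm: "m \<le> m'"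
  have "p k \<le> p (Suc k)" for k using stepf_Suc[OF s, of k] by auto
  then show ?thesis using mm by (rule lift_Suc_mono_le)
qed

lemma stepf_ivt: "stepf p \<Longrightarrow> r \<le> p m \<Longrightarrow> \<exists>m'\<le>m. p m' = r"
proof (induction m)
  case 0 then show ?case by (auto simp: stepf_def)
next
  case (Suc m)
  show ?case
  proof (cases "r = p (Suc m)")
    case True then show ?thesis by blast
  next
    case False
    then have "r \<le> p m" using Suc.prems stepf_Suc[OF Suc.prems(1), of m] by auto
    then obtain m' where "m' \<le> m" "p m' = r" using Suc.IH Suc.prems(1) by blast
    then show ?thesis by (intro exI[of _ m']) simp
  qed
qed

lemma progress_unbounded:
  assumes "\<exists>\<^sub>\<infinity>m. j \<in> tau m" shows "\<exists>m. r \<le> progress tau j m"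
proof (induction r)
  case 0 then show ?case by auto
next
  case (Suc r)
  then obtain m where m: "r \<le> progress tau j m" by auto
  from assms obtain m' where "m' \<ge> m" "j \<in> tau m'" by (auto simp: INFM_nat_le)
  then have "progress tau j (Suc m') = progress tau j m' + 1" by (simp add: progress_Suc)
  moreover have "progress tau j m \<le> progress tau j m'"
    using stepf_mono[OF stepf_progress] \<open>m' \<ge> m\<close> by blast
  ultimately have "Suc r \<le> progress tau j (Suc m')" using m by linarith
  then show ?case by blast
qed

lemma stepf_hit_pred:
  assumes "stepf p" "p m = Suc r" "\<forall>m'<m. p m' \<noteq> Suc r"
  shows "m > 0 \<and> p (m - 1) = r"
proof -
  have "m \<noteq> 0"
  proof
    assume "m = 0" with assms show False by (simp add: stepf_def)
  qed
  then obtain k where k: "m = Suc k" by (cases m) auto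
  then have "p k \<noteq> Suc r" using assms by auto
  moreover have "p (Suc k) = p k \<or> p (Suc k) = Suc (p k)" using assms by (auto simp: stepf_def)
  ultimately show ?thesis using assms k by auto
qed

lemma stepf_hits:
  assumes "stepf p" "\<forall>r. \<exists>m. r \<le> p m" shows "\<exists>m. p m = r"
  using assms stepf_ivt by blast

definition first_hit :: "(nat \<Rightarrow> nat) \<Rightarrow> nat \<Rightarrow> nat" where
  "first_hit p r = (LEAST m. p m = r)"

lemma first_hit:
  assumes "stepf p" "\<forall>r. \<exists>m. r \<le> p m"
  shows "p (first_hit p r) = r" "p m = r \<Longrightarrow> first_hit p r \<le> m"
  using stepf_hits[OF assms, of r] unfolding first_hit_def
  by (auto intro: LeastI_ex Least_le)

lemma first_hit_const:
  assumes "stepf p" "\<forall>r. \<exists>m. r \<le> p m" "first_hit p r \<le> i"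
  shows "p i = r \<longleftrightarrow> i < first_hit p (Suc r)"
proof -
  have a: "p (first_hit p r) = r" using first_hit[OF assms(1,2)] by auto
  have b: "p (first_hit p (Suc r)) = Suc r" using first_hit[OF assms(1,2)] by auto
  have ge: "r \<le> p i" using stepf_mono[OF assms(1) assms(3)] a by simp
  show ?thesis
  proof
    assume "p i = r"
    show "i < first_hit p (Suc r)"
    proof (rule ccontr)
      assume "\<not> ?thesis"
      then have "p (first_hit p (Suc r)) \<le> p i" using stepf_mono[OF assms(1)] by simp
      with b \<open>p i = r\<close> show False by simp
    qed
  next
    assume lt: "i < first_hit p (Suc r)"
    have "p i < Suc r"
    proof (rule ccontr)
      assume "\<not> p i < Suc r"
      then obtain m' where "m' \<le> i" "p m' = Suc r" using stepf_ivt[OF assms(1), of "Suc r" i] by auto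
      then have "first_hit p (Suc r) \<le> i" using first_hit(2)[OF assms(1,2)] by fastforce
      with lt show False by simp
    qed
    then show "p i = r" using ge by simp
  qed
qed

lemma first_hit_mono:
  assumes "stepf p" "\<forall>r. \<exists>m. r \<le> p m"
  shows "first_hit p r < first_hit p (Suc r)"
  using first_hit_const[OF assms, where r=r and i="first_hit p r"] first_hit(1)[OF assms] by simp

lemma stutter_equiv_stepf:
  assumes "stepf p" "\<forall>r. \<exists>m. r \<le> p m" "stepf p'" "\<forall>r. \<exists>m. r \<le> p' m"
  shows "stutter_equiv (\<lambda>m. Y (p m)) (\<lambda>m. Y (p' m))"
proof -
  have s1: "strict_mono (first_hit p)" using first_hit_mono[OF assms(1,2)] by (simp add: strict_mono_Suc_iff)
  have s2: "strict_mono (first_hit p')" using first_hit_mono[OF assms(3,4)] by (simp add: strict_mono_Suc_iff)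
  have z1: "first_hit p 0 = 0" using first_hit(2)[OF assms(1,2), of 0 0] assms(1) by (simp add: stepf_def)
  have z2: "first_hit p' 0 = 0" using first_hit(2)[OF assms(3,4), of 0 0] assms(3) by (simp add: stepf_def)
  have b1: "Y (p i) = Y (p (first_hit p k))" if "first_hit p k \<le> i \<and> i < first_hit p (Suc k)" for k i
  proof -
    have "p i = k" using first_hit_const[OF assms(1,2)] that by blast
    moreover have "p (first_hit p k) = k" using first_hit(1)[OF assms(1,2)] by blast
    ultimately show ?thesis by simp
  qed
  have b2: "Y (p' i) = Y (p' (first_hit p' k))" if "first_hit p' k \<le> i \<and> i < first_hit p' (Suc k)" for k i
  proof -
    have "p' i = k" using first_hit_const[OF assms(3,4)] that by blast
    moreover have "p' (first_hit p' k) = k" using first_hit(1)[OF assms(3,4)] by blast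
    ultimately show ?thesis by simp
  qed
  have e: "Y (p (first_hit p k)) = Y (p' (first_hit p' k))" for k
    using first_hit(1)[OF assms(1,2)] first_hit(1)[OF assms(3,4)] by simp
  show ?thesis unfolding stutter_equiv_def
    apply (rule exI[of _ "first_hit p"], rule exI[of _ "first_hit p'"])
    using s1 s2 z1 z2 b1 b2 e by blast
qed

section \<open>Counting changes\<close>

fun cntf :: "(nat \<Rightarrow> bool) \<Rightarrow> nat \<Rightarrow> nat" where
  "cntf A 0 = 0"
| "cntf A (Suc r) = cntf A r + (if A (Suc r) \<noteq> A r then 1 else 0)"

lemma cntf_mono: "r \<le> r' \<Longrightarrow> cntf A r \<le> cntf A r'"
  by (rule lift_Suc_mono_le[of "cntf A"]) auto

lemma cntf_inv:
  assumes "stepf pa" "stepf pb" "\<forall>m. A (pa m) = B (pb m)"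
  shows "cntf A (pa m) = cntf B (pb m)"
proof (induction m)
  case 0 then show ?case using assms by (simp add: stepf_def)
next
  case (Suc m)
  have sa: "pa (Suc m) = pa m \<or> pa (Suc m) = Suc (pa m)" and sb: "pb (Suc m) = pb m \<or> pb (Suc m) = Suc (pb m)"
    using assms by (auto simp: stepf_def)
  have e1: "A (pa m) = B (pb m)" and e2: "A (pa (Suc m)) = B (pb (Suc m))" using assms by auto
  have ca: "cntf A (pa (Suc m)) = cntf A (pa m) + (if A (pa (Suc m)) \<noteq> A (pa m) then 1 else 0)"
    using sa by (elim disjE) auto
  have cb: "cntf B (pb (Suc m)) = cntf B (pb m) + (if B (pb (Suc m)) \<noteq> B (pb m) then 1 else 0)"
    using sb by (elim disjE) auto
  show ?case unfolding ca cb Suc e1 e2 by simp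
qed


definition dK :: "('s, 'ap) kripke \<Rightarrow> 's \<Rightarrow> 's \<Rightarrow> 's" where
  "dK K s m = (if krel K s m then m else (SOME t. krel K s t))"

lemma stut_simps:
  "init (stut (kripke_mscgs K)) = (kinit K, False)"
  "agents (stut (kripke_mscgs K)) = UNIV"
  "moves (stut (kripke_mscgs K)) = kstates K \<times> UNIV"
  "delta (stut (kripke_mscgs K)) x sig = (if snd (sig None) then (fst x, True)
       else (dK K (fst x) (fst (sig (Some ()))), False))"
  "stage (stut (kripke_mscgs K)) None = Suc 0"
  "stage (stut (kripke_mscgs K)) (Some y) = 0"
  "lab (stut (kripke_mscgs K)) x = Some ` klab K (fst x) \<union> (if snd x then {None} else {})"
proof -
  have "Some ` (UNIV::unit set) \<union> {None} = UNIV"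
    by (simp add: UNIV_option_conv)
  then show "agents (stut (kripke_mscgs K)) = UNIV" by (simp add: stut_def kripke_mscgs_def)
qed (auto simp: stut_def kripke_mscgs_def dK_def split: prod.splits)

lemma kpath_states: "kripke_wf K \<Longrightarrow> kpath K t \<Longrightarrow> t i \<in> kstates K"
  unfolding kripke_wf_def kpath_def by (cases i) auto

lemma dir1:
  fixes K :: "('s, 'ap) kripke" and n :: nat and phi :: "'ap hltl"
  assumes wf: "kripke_wf K"
    and vp: "vars phi \<subseteq> {..<n}"
    and hb: "hyperatl_block (stut (kripke_mscgs K)) (replicate n {None})
            (And (map_hltl Some phi) (conj_list (map fair_formula [0..<n])))"
  shows "ahltl_sat K n phi"
  unfolding ahltl_sat_def
proof (intro allI impI)
  let ?G = "stut (kripke_mscgs K)"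
  fix ts :: "(nat \<Rightarrow> 's) list"
  assume lts: "length ts = n" and kp: "\<forall>j<n. kpath K (ts ! j)"
  from hb obtain str where
    strat: "\<forall>j<n. is_strategy ?G n None (str j None)" and
    win: "\<And>u. is_outcome ?G (replicate n {None}) str u \<Longrightarrow>
            hsat (\<lambda>j i. lab ?G (u i ! j)) 0 (And (map_hltl Some phi) (conj_list (map fair_formula [0..<n])))"
    unfolding hyperatl_block_def by auto
  define s0 where "s0 ps = map (\<lambda>j. (\<lambda>a::unit option. case a of None \<Rightarrow> (kinit K, False)
        | Some _ \<Rightarrow> ((ts!j) (Suc (ps!j)), False))) [0..<n]" for ps :: "nat list"
  define bit where "bit h ps j = snd (str j None h (s0 ps))" for h ps j
  define stp where "stp = (\<lambda>(h, ps). (h @ [map (\<lambda>j. if bit h ps j then (fst (last h ! j), True)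
        else ((ts!j) (Suc (ps!j)), False)) [0..<n]],
        map (\<lambda>j. if bit h ps j then ps!j else Suc (ps!j)) [0..<n]))"
  define run where "run i = (stp ^^ i) ([replicate n (kinit K, False)], replicate n 0)" for i
  define u where "u i = last (fst (run i))" for i
  define P where "P i = snd (run i)" for i
  have run_Suc: "run (Suc i) = stp (run i)" for i by (simp add: run_def)
  have uS: "u (Suc i) = map (\<lambda>j. if bit (fst (run i)) (P i) j then (fst (u i ! j), True)
        else ((ts!j) (Suc (P i ! j)), False)) [0..<n]" for i
    by (simp add: u_def P_def run_Suc stp_def split: prod.splits)
  have PS: "P (Suc i) = map (\<lambda>j. if bit (fst (run i)) (P i) j then P i ! j else Suc (P i ! j)) [0..<n]" for i
    by (simp add: P_def run_Suc stp_def split: prod.splits)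
  have hist: "fst (run i) = map u [0..<Suc i]" for i
  proof (induction i)
    case 0 then show ?case by (simp add: u_def run_def)
  next
    case (Suc i)
    have "fst (run (Suc i)) = fst (run i) @ [u (Suc i)]"
      by (simp add: u_def run_Suc stp_def split: prod.splits)
    then show ?case using Suc by simp
  qed
  have u0: "u 0 = replicate n (kinit K, False)" by (simp add: u_def run_def)
  have P0: "P 0 = replicate n 0" by (simp add: P_def run_def)
  have lu: "length (u i) = n" for i by (cases i) (simp_all add: u0 uS)
  have lP: "length (P i) = n" for i by (cases i) (simp_all add: P0 PS)
  define b where "b i j = bit (map u [0..<Suc i]) (P i) j" for i j
  have uS': "j < n \<Longrightarrow> u (Suc i) ! j = (if b i j then (fst (u i ! j), True) else ((ts!j) (Suc (P i ! j)), False))" for i j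
    by (simp add: uS b_def hist)
  have PS': "j < n \<Longrightarrow> P (Suc i) ! j = (if b i j then P i ! j else Suc (P i ! j))" for i j
    by (simp add: PS b_def hist)
  have inv: "j < n \<Longrightarrow> fst (u i ! j) = (ts!j) (P i ! j)" for i j
  proof (induction i)
    case 0 then show ?case using kp by (simp add: u0 P0 kpath_def)
  next
    case (Suc i) then show ?case by (simp add: uS' PS')
  qed
  have outc: "is_outcome ?G (replicate n {None}) str u"
    unfolding is_outcome_def Let_def length_replicate
  proof (intro conjI allI)
    show "u 0 = replicate n (init ?G)" by (simp add: u0 stut_simps)
    fix i
    show "length (u (Suc i)) = n" by (rule lu)
    define h where "h = map u [0..<Suc i]"
    define sg where "sg = map (\<lambda>j. (s0 (P i) ! j)(None := str j None h (s0 (P i)))) [0..<n]"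
    have sgN: "j < n \<Longrightarrow> (sg ! j) None = str j None h (s0 (P i))" for j by (simp add: sg_def)
    have sgS: "j < n \<Longrightarrow> (sg ! j) (Some (y::unit)) = ((ts!j) (Suc (P i ! j)), False)" for j y by (simp add: sg_def s0_def)
    have same: "j < n \<Longrightarrow> str j None h (s0 (P i)) = str j None h sg" for j
    proof -
      assume j: "j < n"
      have "is_strategy ?G n None (str j None)" using strat j by auto
      then have "\<forall>sig sig'. length sig = n \<longrightarrow> length sig' = n \<longrightarrow>
        (\<forall>j<n. \<forall>xi'\<in>agents ?G. stage ?G xi' < stage ?G None \<longrightarrow> (sig ! j) xi' = (sig' ! j) xi') \<longrightarrow>
        str j None h sig = str j None h sig'" unfolding is_strategy_def by blast
      moreover have "\<forall>j<n. \<forall>xi'\<in>agents ?G. stage ?G xi' < stage ?G None \<longrightarrow> (s0 (P i) ! j) xi' = (sg ! j) xi'"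
        by (auto simp: stut_simps sg_def)
      ultimately show ?thesis by (simp add: sg_def s0_def)
    qed
    show "\<exists>sig. length sig = n \<and>
             (\<forall>j<n. \<forall>xi\<in>agents ?G. (sig ! j) xi \<in> moves ?G) \<and>
             (\<forall>j<n. u (Suc i) ! j = delta ?G (u i ! j) (sig ! j)) \<and>
             (\<forall>j<n. \<forall>xi\<in>replicate n {None} ! j. (sig ! j) xi = str j xi (map u [0..<Suc i]) sig)"
    proof (intro exI[of _ sg] conjI allI impI ballI)
      show "length sg = n" by (simp add: sg_def)
    next
      fix j and xi :: "unit option" assume j: "j < n"
      show "(sg ! j) xi \<in> moves ?G"
      proof (cases xi)
        case None
        have "is_strategy ?G n None (str j None)" using strat j by auto
        then show ?thesis using None sgN[OF j] unfolding is_strategy_def by auto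
      next
        case (Some y)
        then show ?thesis using sgS[OF j] kpath_states[OF wf] kp j by (simp add: stut_simps)
      qed
    next
      fix j assume j: "j < n"
      have k: "krel K ((ts!j) (P i ! j)) ((ts!j) (Suc (P i ! j)))" using kp j by (simp add: kpath_def)
      show "u (Suc i) ! j = delta ?G (u i ! j) (sg ! j)"
        using k by (simp add: uS'[OF j] stut_simps sgN[OF j] sgS[OF j] inv[OF j] dK_def b_def bit_def h_def)
    next
      fix j and xi :: "unit option" assume j: "j < n" and xi: "xi \<in> replicate n {None} ! j"
      then have "xi = None" by simp
      then show "(sg ! j) xi = str j xi (map u [0..<Suc i]) sg"
        using sgN[OF j] same[OF j] h_def by simp
    qed
  qed
  have hs: "hsat (\<lambda>j i. lab ?G (u i ! j)) 0 (And (map_hltl Some phi) (conj_list (map fair_formula [0..<n])))"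
    by (rule win[OF outc])
  define tau where "tau m = {j. j < n \<and> \<not> b m j}" for m
  have prog: "j < n \<Longrightarrow> progress tau j m = P m ! j" for j m
  proof (induction m)
    case 0 then show ?case by (simp add: progress_0 P0)
  next
    case (Suc m) then show ?case by (simp add: progress_Suc PS' tau_def)
  qed
  have fair: "fair_traj n tau"
    unfolding fair_traj_def
  proof (intro conjI allI impI)
    fix m show "tau m \<subseteq> {..<n}" by (auto simp: tau_def)
  next
    fix j assume j: "j < n"
    have "\<forall>k. \<exists>l\<ge>k. None \<notin> lab ?G (u l ! j)" using hs j by (simp add: hsat_fair_list)
    moreover have "None \<in> lab ?G x \<longleftrightarrow> snd x" for x by (simp add: stut_simps)
    ultimately have A: "\<forall>k. \<exists>l\<ge>k. \<not> snd (u l ! j)" by simp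
    show "\<exists>\<^sub>\<infinity>m. j \<in> tau m"
      unfolding INFM_nat_le
    proof
      fix k
      obtain l where l: "l \<ge> Suc k" "\<not> snd (u l ! j)" using A by blast
      then obtain m where m: "l = Suc m" by (cases l) auto
      then have "\<not> b m j" using l uS'[OF j, of m] by (auto split: if_splits)
      then show "\<exists>m\<ge>k. j \<in> tau m" using m l j by (auto simp: tau_def intro!: exI[of _ m])
    qed
  qed
  have "hsat (\<lambda>j k. Some -` lab ?G (u k ! j)) 0 phi" using hs by (simp add: hsat_map)
  moreover have "hsat (\<lambda>j k. Some -` lab ?G (u k ! j)) 0 phi =
      hsat (\<lambda>j m. klab K ((ts ! j) (progress tau j m))) 0 phi"
  proof (rule hsat_cong)
    fix j k assume "j \<in> vars phi"
    then have j: "j < n" using vp by auto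
    show "Some -` lab ?G (u k ! j) = klab K ((ts ! j) (progress tau j k))"
      by (auto simp: stut_simps prog[OF j] inv[OF j])
  qed
  ultimately show "\<exists>tau. fair_traj n tau \<and> hsat (\<lambda>j m. klab K ((ts ! j) (progress tau j m))) 0 phi"
    using fair by blast
qed


lemma dK_krel: "kripke_wf K \<Longrightarrow> s \<in> kstates K \<Longrightarrow> krel K s (dK K s m)"
  unfolding dK_def kripke_wf_def by (auto intro: someI_ex)

lemma krel_states: "kripke_wf K \<Longrightarrow> krel K s t \<Longrightarrow> s \<in> kstates K \<and> t \<in> kstates K"
  unfolding kripke_wf_def by auto

lemma mk_path:
  assumes sp: "stepf p" and ub: "\<forall>r. \<exists>m. r \<le> p m" and z0: "z 0 = kinit K"
    and mv: "\<And>m. p (Suc m) = Suc (p m) \<Longrightarrow> krel K (z m) (z (Suc m))"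
    and st: "\<And>m. p (Suc m) = p m \<Longrightarrow> z (Suc m) = z m"
  shows "\<exists>y. kpath K y \<and> (\<forall>m. z m = y (p m))"
proof -
  define y where "y r = z (first_hit p r)" for r
  have zy: "z m = y (p m)" for m
  proof -
    define m0 where "m0 = first_hit p (p m)"
    have le: "m0 \<le> m" using first_hit(2)[OF sp ub] m0_def by blast
    have lt: "m < first_hit p (Suc (p m))" using first_hit_const[OF sp ub le[unfolded m0_def]] by simp
    have "m0 + d \<le> m \<Longrightarrow> z (m0 + d) = z m0" for d
    proof (induction d)
      case 0 then show ?case by simp
    next
      case (Suc d)
      have a: "p (m0 + d) = p m" using first_hit_const[OF sp ub, of "p m" "m0 + d"] m0_def Suc.prems lt by simp
      have b: "p (Suc (m0 + d)) = p m" using first_hit_const[OF sp ub, of "p m" "Suc (m0 + d)"] m0_def Suc.prems lt by simp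
      have "z (Suc (m0 + d)) = z (m0 + d)" using st a b by simp
      then show ?case using Suc by simp
    qed
    from this[of "m - m0"] le show ?thesis by (simp add: y_def m0_def)
  qed
  have "kpath K y" unfolding kpath_def
  proof (intro conjI allI)
    show "y 0 = kinit K" using zy[of 0] sp z0 by (simp add: stepf_def)
  next
    fix r
    define m1 where "m1 = first_hit p (Suc r)"
    have h1: "p m1 = Suc r" using first_hit(1)[OF sp ub] m1_def by simp
    have h2: "\<forall>m'<m1. p m' \<noteq> Suc r" using first_hit(2)[OF sp ub] m1_def by fastforce
    from stepf_hit_pred[OF sp h1 h2] obtain k where k: "m1 = Suc k" "p k = r"
      by (cases m1) auto
    then have "krel K (z k) (z (Suc k))" using mv h1 by simp
    then show "krel K (y r) (y (Suc r))" using zy[of k] zy[of "Suc k"] k h1 by simp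
  qed
  then show ?thesis using zy by blast
qed

lemma mk_path_ext:
  assumes wf: "kripke_wf K" and sp: "stepf p" and z0: "z 0 = kinit K"
    and mv: "\<And>m. p (Suc m) = Suc (p m) \<Longrightarrow> krel K (z m) (z (Suc m))"
    and st: "\<And>m. p (Suc m) = p m \<Longrightarrow> z (Suc m) = z m"
    and stuck: "\<And>m. m \<ge> T \<Longrightarrow> p (Suc m) = p m"
    and q: "krel K (z T) q"
  shows "\<exists>y. kpath K y \<and> (\<forall>m. z m = y (p m)) \<and> y (Suc (p T)) = q"
proof -
  define e where "e = rec_nat q (\<lambda>_ s. SOME t. krel K s t)"
  have e0: "e 0 = q" by (simp add: e_def)
  have eS: "e (Suc r) = (SOME t. krel K (e r) t)" for r by (simp add: e_def)
  have es: "e r \<in> kstates K" for r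
  proof (induction r)
    case 0 then show ?case using krel_states[OF wf q] e0 by simp
  next
    case (Suc r)
    then have "\<exists>t. krel K (e r) t" using wf by (auto simp: kripke_wf_def)
    then have "krel K (e r) (e (Suc r))" unfolding eS by (rule someI_ex)
    then show ?case using krel_states[OF wf] by blast
  qed
  have ek: "krel K (e r) (e (Suc r))" for r
  proof -
    have "\<exists>t. krel K (e r) t" using wf es by (auto simp: kripke_wf_def)
    then show ?thesis unfolding eS by (rule someI_ex)
  qed
  define z' where "z' m = (if m \<le> T then z m else e (m - Suc T))" for m
  define p' where "p' m = (if m \<le> T then p m else p T + (m - T))" for m
  have sp': "stepf p'" unfolding stepf_def
  proof (intro conjI allI)
    show "p' 0 = 0" using sp by (simp add: p'_def stepf_def)
  next
    fix m
    show "p' (Suc m) = p' m \<or> p' (Suc m) = Suc (p' m)"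
    proof (cases "Suc m \<le> T")
      case True then show ?thesis using stepf_Suc[OF sp, of m] by (simp add: p'_def)
    next
      case False
      then have "m = T \<or> m > T" by auto
      then show ?thesis
      proof
        assume "m = T" then show ?thesis by (simp add: p'_def)
      next
        assume "m > T"
        then have "Suc m - T = Suc (m - T)" by simp
        then show ?thesis using \<open>m > T\<close> by (simp add: p'_def)
      qed
    qed
  qed
  have ub': "\<forall>r. \<exists>m. r \<le> p' m"
  proof
    fix r show "\<exists>m. r \<le> p' m" by (rule exI[of _ "r + Suc T"]) (simp add: p'_def)
  qed
  have mv': "krel K (z' m) (z' (Suc m))" if "p' (Suc m) = Suc (p' m)" for m
  proof (cases "Suc m \<le> T")
    case True
    then have "p (Suc m) = Suc (p m)" using that by (simp add: p'_def)
    then show ?thesis using mv True by (simp add: z'_def)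
  next
    case False
    show ?thesis
    proof (cases "m = T")
      case True then show ?thesis using q e0 by (simp add: z'_def)
    next
      case False
      then have "m > T" using \<open>\<not> Suc m \<le> T\<close> by simp
      then have "Suc m - Suc T = Suc (m - Suc T)" by simp
      then show ?thesis using \<open>m > T\<close> ek by (simp add: z'_def)
    qed
  qed
  have st': "z' (Suc m) = z' m" if "p' (Suc m) = p' m" for m
  proof -
    have "Suc m \<le> T"
    proof (rule ccontr)
      assume a: "\<not> Suc m \<le> T"
      show False
      proof (cases "m \<le> T")
        case True then have "m = T" using a by simp
        then show False using that by (simp add: p'_def)
      next
        case False then show False using that a by (simp add: p'_def)
      qed
    qed
    then show ?thesis using that st by (simp add: p'_def z'_def)
  qed
  have z'0: "z' 0 = kinit K" using z0 by (simp add: z'_def)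
  obtain y where y: "kpath K y" "\<forall>m. z' m = y (p' m)"
    using mk_path[OF sp' ub' z'0 mv' st'] by blast
  have pT: "m \<ge> T \<Longrightarrow> p m = p T \<and> z m = z T" for m
  proof (induction m rule: dec_induct)
    case base then show ?case by simp
  next
    case (step m) then show ?case using stuck st by simp
  qed
  have "z m = y (p m)" for m
  proof (cases "m \<le> T")
    case True then show ?thesis using y(2)[rule_format, of m] by (simp add: z'_def p'_def)
  next
    case False
    then have "p m = p T" "z m = z T" using pT[of m] by auto
    then show ?thesis using y(2)[rule_format, of T] by (simp add: z'_def p'_def)
  qed
  moreover have "y (Suc (p T)) = q" using y(2)[rule_format, of "Suc T"] e0 by (simp add: z'_def p'_def)
  ultimately show ?thesis using y(1) by blast
qed

definition consE :: "('ap \<times> nat \<times> nat) set \<Rightarrow> ('s, 'ap) kripke \<Rightarrow> (nat \<Rightarrow> 's) \<Rightarrow> bool" where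
  "consE E K cfg \<longleftrightarrow> (\<forall>(a, x, y)\<in>E. (a \<in> klab K (cfg x) \<longleftrightarrow> a \<in> klab K (cfg y)))"

definition post :: "nat set \<Rightarrow> (nat \<Rightarrow> 's) \<Rightarrow> (nat \<Rightarrow> 's) \<Rightarrow> nat \<Rightarrow> 's" where
  "post S cur prop k = (if k \<in> S then prop k else cur k)"

definition smax :: "('ap \<times> nat \<times> nat) set \<Rightarrow> ('s, 'ap) kripke \<Rightarrow> (nat \<Rightarrow> 's) \<Rightarrow> (nat \<Rightarrow> 's) \<Rightarrow> nat set" where
  "smax E K cur prop = {k. \<exists>S. consE E K (post S cur prop) \<and> k \<in> S}"

lemma smax_valid:
  assumes c: "consE E K cur"
  shows "consE E K (post (smax E K cur prop) cur prop)"
  unfolding consE_def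
proof (clarify)
  fix a x y assume e: "(a, x, y) \<in> E"
  let ?L = "\<lambda>s. a \<in> klab K s"
  let ?S = "smax E K cur prop"
  have cxy: "?L (cur x) = ?L (cur y)" using c e by (auto simp: consE_def)
  have V: "consE E K (post S cur prop) \<Longrightarrow> ?L (post S cur prop x) = ?L (post S cur prop y)" for S
    using e by (auto simp: consE_def)
  show "?L (post ?S cur prop x) = ?L (post ?S cur prop y)"
  proof (cases "x \<in> ?S"; cases "y \<in> ?S")
    assume x: "x \<in> ?S" and y: "y \<in> ?S"
    obtain S1 where S1: "consE E K (post S1 cur prop)" "x \<in> S1" using x by (auto simp: smax_def)
    obtain S2 where S2: "consE E K (post S2 cur prop)" "y \<in> S2" using y by (auto simp: smax_def)
    have 1: "?L (post S1 cur prop x) = ?L (post S1 cur prop y)" by (rule V[OF S1(1)])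
    have 2: "?L (post S2 cur prop x) = ?L (post S2 cur prop y)" by (rule V[OF S2(1)])
    show ?thesis using 1 2 cxy S1(2) S2(2) x y by (auto simp: post_def split: if_splits)
  next
    assume x: "x \<in> ?S" and y: "y \<notin> ?S"
    obtain S1 where S1: "consE E K (post S1 cur prop)" "x \<in> S1" using x by (auto simp: smax_def)
    have "y \<notin> S1" using y S1 by (auto simp: smax_def)
    then show ?thesis using V[OF S1(1)] S1(2) x y by (simp add: post_def)
  next
    assume x: "x \<notin> ?S" and y: "y \<in> ?S"
    obtain S2 where S2: "consE E K (post S2 cur prop)" "y \<in> S2" using y by (auto simp: smax_def)
    have "x \<notin> S2" using x S2 by (auto simp: smax_def)
    then show ?thesis using V[OF S2(1)] S2(2) x y by (simp add: post_def)
  next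
    assume x: "x \<notin> ?S" and y: "y \<notin> ?S"
    then show ?thesis using cxy by (simp add: post_def)
  qed
qed


lemma consE_cong:
  assumes "\<forall>(a, x, y)\<in>E. x < n \<and> y < n" "\<And>j. j < n \<Longrightarrow> f j = g j"
  shows "consE E K f = consE E K g"
  using assms unfolding consE_def by fastforce

lemma greedy_fair:
  fixes K :: "('s, 'ap) kripke" and E :: "('ap \<times> nat \<times> nat) set"
    and cur prp :: "nat \<Rightarrow> nat \<Rightarrow> 's" and tau :: "nat \<Rightarrow> nat set"
  assumes wf: "kripke_wf K"
    and En: "\<forall>(a, x, y)\<in>E. x < n \<and> y < n"
    and AH: "\<And>ys. length ys = n \<Longrightarrow> (\<forall>j<n. kpath K (ys!j)) \<Longrightarrow>
       (\<exists>tau'. fair_traj n tau' \<and> (\<forall>m. consE E K (\<lambda>j. (ys!j) (progress tau' j m))))"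
    and tau: "\<And>m. tau m = {j. j < n \<and> j \<in> smax E K (cur m) (prp m)}"
    and c0: "\<And>j. j < n \<Longrightarrow> cur 0 j = kinit K"
    and cS: "\<And>m j. j < n \<Longrightarrow> cur (Suc m) j = (if j \<in> tau m then prp m j else cur m j)"
    and kr: "\<And>m j. j < n \<Longrightarrow> krel K (cur m j) (prp m j)"
    and cc: "\<And>m. consE E K (cur m)"
  shows "\<forall>j<n. \<exists>\<^sub>\<infinity>m. j \<in> tau m"
proof (rule ccontr)
  assume nf: "\<not> (\<forall>j<n. \<exists>\<^sub>\<infinity>m. j \<in> tau m)"
  define J where "J = {j. j < n \<and> \<not> (\<exists>\<^sub>\<infinity>m. j \<in> tau m)}"
  have Jne: "J \<noteq> {}" using nf by (auto simp: J_def)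
  have Jfin: "finite J" by (auto simp: J_def)
  have "\<forall>j\<in>J. \<exists>T. \<forall>m\<ge>T. j \<notin> tau m" by (auto simp: J_def MOST_nat_le)
  then obtain Tf where Tf: "\<And>j m. j \<in> J \<Longrightarrow> m \<ge> Tf j \<Longrightarrow> j \<notin> tau m" by metis
  define T where "T = Max (insert 0 (Tf ` J))"
  have JT: "j \<in> J \<Longrightarrow> m \<ge> T \<Longrightarrow> j \<notin> tau m" for j m
  proof -
    assume j: "j \<in> J" and m: "m \<ge> T"
    have "Tf j \<le> T" unfolding T_def using Jfin j by (intro Max_ge) auto
    then show ?thesis using Tf j m by auto
  qed
  define pos where "pos j m = progress tau j m" for j m
  have sp: "stepf (pos j)" for j unfolding pos_def by (rule stepf_progress)
  have posS: "pos j (Suc m) = (if j \<in> tau m then Suc (pos j m) else pos j m)" for j m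
    by (simp add: pos_def progress_Suc)
  have pos_stuck: "pos j m = pos j T" if jJ: "j \<in> J" and mT: "m \<ge> T" for j m
    using mT
  proof (induction m rule: dec_induct)
    case base then show ?case by simp
  next
    case (step m) then show ?case using JT[OF jJ] posS by simp
  qed
  have ub: "j < n \<Longrightarrow> j \<notin> J \<Longrightarrow> \<exists>m. r \<le> pos j m" for j r
    unfolding pos_def by (rule progress_unbounded) (auto simp: J_def)
  have "\<forall>j. \<exists>y. j < n \<longrightarrow> kpath K y \<and> (\<forall>m. cur m j = y (pos j m)) \<and> (j \<in> J \<longrightarrow> y (Suc (pos j T)) = prp T j)"
  proof (intro allI)
    fix j
    show "\<exists>y. j < n \<longrightarrow> kpath K y \<and> (\<forall>m. cur m j = y (pos j m)) \<and> (j \<in> J \<longrightarrow> y (Suc (pos j T)) = prp T j)"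
    proof (cases "j < n")
      case False then show ?thesis by simp
    next
      case j: True
      have z0: "cur 0 j = kinit K" using c0 j by simp
      have mv: "krel K (cur m j) (cur (Suc m) j)" if "pos j (Suc m) = Suc (pos j m)" for m
      proof -
        have "j \<in> tau m" using that posS[of j m] by (auto split: if_splits)
        then show ?thesis using cS[OF j] kr[OF j] by simp
      qed
      have st: "cur (Suc m) j = cur m j" if "pos j (Suc m) = pos j m" for m
      proof -
        have "j \<notin> tau m" using that posS[of j m] by (auto split: if_splits)
        then show ?thesis using cS[OF j] by simp
      qed
      show ?thesis
      proof (cases "j \<in> J")
        case True
        have stuck: "m \<ge> T \<Longrightarrow> pos j (Suc m) = pos j m" for m using JT[OF True] posS by simp
        obtain y where "kpath K y \<and> (\<forall>m. cur m j = y (pos j m)) \<and> y (Suc (pos j T)) = prp T j"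
          using mk_path_ext[OF wf sp z0 mv st stuck kr[OF j]] by blast
        then show ?thesis by blast
      next
        case False
        have "\<forall>r. \<exists>m. r \<le> pos j m" using ub[OF j False] by blast
        then obtain y where "kpath K y \<and> (\<forall>m. cur m j = y (pos j m))"
          using mk_path[OF sp _ z0 mv st] by blast
        then show ?thesis using False by blast
      qed
    qed
  qed
  then obtain yf where yf: "\<And>j. j < n \<Longrightarrow> kpath K (yf j) \<and> (\<forall>m. cur m j = yf j (pos j m)) \<and>
      (j \<in> J \<longrightarrow> yf j (Suc (pos j T)) = prp T j)" by metis
  define ys where "ys = map yf [0..<n]"
  have ysj: "j < n \<Longrightarrow> ys ! j = yf j" for j by (simp add: ys_def)
  obtain tau' where ft: "fair_traj n tau'" and ct: "\<And>m. consE E K (\<lambda>j. (ys!j) (progress tau' j m))"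
    using AH[of ys] yf ysj by (auto simp: ys_def)
  define pos' where "pos' j m = progress tau' j m" for j m
  have sp': "stepf (pos' j)" for j unfolding pos'_def by (rule stepf_progress)
  have ub': "j < n \<Longrightarrow> \<exists>m. r \<le> pos' j m" for j r
    unfolding pos'_def by (rule progress_unbounded) (use ft in \<open>auto simp: fair_traj_def\<close>)
  have ct': "consE E K (\<lambda>j. yf j (pos' j m))" for m
    using ct[of m] consE_cong[OF En, of "\<lambda>j. (ys!j) (progress tau' j m)" "\<lambda>j. yf j (pos' j m)"]
    by (simp add: ysj pos'_def)
  have cg: "consE E K (\<lambda>j. yf j (pos j m))" for m
    using cc[of m] consE_cong[OF En, of "cur m" "\<lambda>j. yf j (pos j m)"] yf by simp
  define A where "A a j r = (a \<in> klab K (yf j r))" for a j r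
  have gcnt: "(a, x, y) \<in> E \<Longrightarrow> cntf (A a x) (pos x m) = cntf (A a y) (pos y m)" for a x y m
  proof (rule cntf_inv[OF sp sp], rule allI)
    fix m' assume e: "(a, x, y) \<in> E"
    show "A a x (pos x m') = A a y (pos y m')" using cg[of m'] e by (auto simp: consE_def A_def)
  qed
  have tcnt: "(a, x, y) \<in> E \<Longrightarrow> cntf (A a x) (pos' x m) = cntf (A a y) (pos' y m)" for a x y m
  proof (rule cntf_inv[OF sp' sp'], rule allI)
    fix m' assume e: "(a, x, y) \<in> E"
    show "A a x (pos' x m') = A a y (pos' y m')" using ct'[of m'] e by (auto simp: consE_def A_def)
  qed
  have exM: "j \<in> J \<Longrightarrow> \<exists>m. pos j T < pos' j (Suc m)" for j
  proof -
    assume "j \<in> J"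
    then obtain m where "Suc (pos j T) \<le> pos' j m" using ub'[of j "Suc (pos j T)"] by (auto simp: J_def)
    moreover have "pos' j m \<le> pos' j (Suc m)" using stepf_mono[OF sp'] by simp
    ultimately have "pos j T < pos' j (Suc m)" by linarith
    then show ?thesis by blast
  qed
  define Mj where "Mj j = (LEAST m. pos j T < pos' j (Suc m))" for j
  define M where "M = Min (Mj ` J)"
  define X where "X = {j \<in> J. Mj j = M}"
  have "M \<in> Mj ` J" unfolding M_def using Jfin Jne by (intro Min_in) auto
  then have Xne: "X \<noteq> {}" by (auto simp: X_def)
  have Mj1: "j \<in> J \<Longrightarrow> pos j T < pos' j (Suc (Mj j))" for j
    unfolding Mj_def by (rule LeastI_ex) (rule exM)
  have Mj2: "j \<in> J \<Longrightarrow> m < Mj j \<Longrightarrow> pos' j (Suc m) \<le> pos j T" for j m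
    unfolding Mj_def using not_less_Least by (metis not_le)
  have Xpos: "j \<in> X \<Longrightarrow> pos' j (Suc M) = Suc (pos j T)" for j
  proof -
    assume jX: "j \<in> X"
    then have jJ: "j \<in> J" and MM: "Mj j = M" by (auto simp: X_def)
    have a: "pos j T < pos' j (Suc M)" using Mj1[OF jJ] MM by simp
    have b: "pos' j M \<le> pos j T"
    proof (cases M)
      case 0 then show ?thesis using sp' by (simp add: stepf_def)
    next
      case (Suc k) then show ?thesis using Mj2[OF jJ, of k] MM by simp
    qed
    have "pos' j (Suc M) = pos' j M \<or> pos' j (Suc M) = Suc (pos' j M)" using sp' by (simp add: stepf_def)
    then show ?thesis using a b by auto
  qed
  have Jpos: "j \<in> J \<Longrightarrow> j \<notin> X \<Longrightarrow> pos' j (Suc M) \<le> pos j T" for j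
  proof -
    assume jJ: "j \<in> J" and jX: "j \<notin> X"
    have "M \<le> Mj j" unfolding M_def using Jfin jJ by (intro Min_le) auto
    moreover have "M \<noteq> Mj j" using jJ jX by (auto simp: X_def)
    ultimately show ?thesis using Mj2[OF jJ, of M] by simp
  qed
  have NC: "A a j (Suc (pos j T)) = A a j (pos j T)"
    if jX: "j \<in> X" and l: "l < n" "l \<notin> X" and e: "(a, j, l) \<in> E \<or> (a, l, j) \<in> E" for j l a
  proof (rule ccontr)
    assume chg: "A a j (Suc (pos j T)) \<noteq> A a j (pos j T)"
    have jJ: "j \<in> J" using jX by (auto simp: X_def)
    define c where "c = cntf (A a j) (pos j T)"
    have c1: "cntf (A a j) (Suc (pos j T)) = Suc c" using chg by (simp add: c_def)
    have eq1: "cntf (A a j) (pos' j m) = cntf (A a l) (pos' l m)" for m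
      using e tcnt by metis
    have eq2: "cntf (A a j) (pos j m) = cntf (A a l) (pos l m)" for m
      using e gcnt by metis
    have s1: "cntf (A a l) (pos' l (Suc M)) = Suc c" using eq1[of "Suc M"] Xpos[OF jX] c1 by simp
    obtain m where m: "m \<ge> T" "pos' l (Suc M) \<le> pos l m"
    proof (cases "l \<in> J")
      case True then show ?thesis using that[of T] Jpos l by simp
    next
      case False
      obtain m0 where m0: "pos' l (Suc M) \<le> pos l m0" using ub[OF l(1) False] by blast
      have "pos l m0 \<le> pos l (max m0 T)" using stepf_mono[OF sp] by simp
      then show ?thesis using that[of "max m0 T"] m0 by simp
    qed
    have "cntf (A a l) (pos l m) = c" using eq2[of m] pos_stuck[OF jJ m(1)] by (simp add: c_def)
    moreover have "cntf (A a l) (pos' l (Suc M)) \<le> cntf (A a l) (pos l m)" using cntf_mono m(2) by blast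
    ultimately show False using s1 by simp
  qed
  have pX: "j \<in> X \<Longrightarrow> post X (cur T) (prp T) j = yf j (Suc (pos j T))" for j
    using yf[of j] by (auto simp: X_def J_def post_def)
  have pnX: "j < n \<Longrightarrow> j \<notin> X \<Longrightarrow> post X (cur T) (prp T) j = yf j (pos j T)" for j
    using yf[of j] by (auto simp: post_def)
  have valid: "consE E K (post X (cur T) (prp T))"
    unfolding consE_def
  proof (clarify)
    fix a x y assume e: "(a, x, y) \<in> E"
    have xn: "x < n" and yn: "y < n" using En e by auto
    have g: "A a x (pos x T) = A a y (pos y T)" using cg[of T] e by (auto simp: consE_def A_def)
    show "(a \<in> klab K (post X (cur T) (prp T) x)) = (a \<in> klab K (post X (cur T) (prp T) y))"
    proof (cases "x \<in> X"; cases "y \<in> X")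
      assume x: "x \<in> X" and y: "y \<in> X"
      have "A a x (pos' x (Suc M)) = A a y (pos' y (Suc M))" using ct'[of "Suc M"] e by (auto simp: consE_def A_def)
      then show ?thesis using pX[OF x] pX[OF y] Xpos[OF x] Xpos[OF y] by (simp add: A_def)
    next
      assume x: "x \<in> X" and y: "y \<notin> X"
      have "A a x (Suc (pos x T)) = A a x (pos x T)" using NC[OF x yn y] e by blast
      then show ?thesis using pX[OF x] pnX[OF yn y] g by (simp add: A_def)
    next
      assume x: "x \<notin> X" and y: "y \<in> X"
      have "A a y (Suc (pos y T)) = A a y (pos y T)" using NC[OF y xn x] e by blast
      then show ?thesis using pX[OF y] pnX[OF xn x] g by (simp add: A_def)
    next
      assume x: "x \<notin> X" and y: "y \<notin> X"
      then show ?thesis using pnX[OF xn x] pnX[OF yn y] g by (simp add: A_def)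
    qed
  qed
  obtain j where jX: "j \<in> X" using Xne by blast
  then have "j \<in> smax E K (cur T) (prp T)" using valid by (auto simp: smax_def)
  moreover have "j < n" "j \<in> J" using jX by (auto simp: X_def J_def)
  ultimately have "j \<in> tau T" using tau by simp
  then show False using JT[OF \<open>j \<in> J\<close>] by simp
qed


lemma dir2:
  fixes K :: "('s, 'ap) kripke" and n :: nat and phi :: "'ap hltl"
  assumes wf: "kripke_wf K"
    and vp: "vars phi \<subseteq> {..<n}"
    and adm: "admissible phi"
    and ah: "ahltl_sat K n phi"
  shows "hyperatl_block (stut (kripke_mscgs K)) (replicate n {None})
            (And (map_hltl Some phi) (conj_list (map fair_formula [0..<n])))"
proof -
  let ?G = "stut (kripke_mscgs K)"
  obtain cs where phics: "phi = conj_list cs" and csk: "\<forall>c\<in>set cs. eq_formula c \<or> stutter_inv_single c"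
    using adm unfolding admissible_def by blast
  have vc: "c \<in> set cs \<Longrightarrow> vars c \<subseteq> {..<n}" for c using vp phics by (auto simp: vars_conj_list)
  define E where "E = {(a, x, y). \<exists>as. Glob (conj_list (map (\<lambda>a. Iff (Prop a x) (Prop a y)) as)) \<in> set cs \<and> a \<in> set as}"
  have En: "\<forall>(a, x, y)\<in>E. x < n \<and> y < n"
  proof (clarify)
    fix a x y assume "(a, x, y) \<in> E"
    then obtain as where c1: "Glob (conj_list (map (\<lambda>a. Iff (Prop a x) (Prop a y)) as)) \<in> set cs"
      and c2: "a \<in> set as"
      by (auto simp: E_def)
    have "as \<noteq> []" using c2 by auto
    then have "vars (Glob (conj_list (map (\<lambda>a. Iff (Prop a x) (Prop a y)) as))) = {x, y}"
      by (simp add: vars_eqf)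
    then show "x < n \<and> y < n" using vc[OF c1] by auto
  qed
  have phiE: "hsat w 0 phi \<Longrightarrow> (a, x, y) \<in> E \<Longrightarrow> (a \<in> w x m \<longleftrightarrow> a \<in> w y m)" for w a x y m
  proof -
    assume h: "hsat w 0 phi" and e: "(a, x, y) \<in> E"
    then obtain as where c: "Glob (conj_list (map (\<lambda>a. Iff (Prop a x) (Prop a y)) as)) \<in> set cs" "a \<in> set as"
      by (auto simp: E_def)
    then have "hsat w 0 (Glob (conj_list (map (\<lambda>a. Iff (Prop a x) (Prop a y)) as)))"
      using h phics by (simp add: hsat_conj_list)
    then show ?thesis using c(2) by (simp add: hsat_eqf)
  qed
  have AH: "\<exists>tau'. fair_traj n tau' \<and> (\<forall>m. consE E K (\<lambda>j. (ys!j) (progress tau' j m)))"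
    if ly: "length ys = n" and kys: "\<forall>j<n. kpath K (ys!j)" for ys
  proof -
    obtain tau' where "fair_traj n tau'" and h: "hsat (\<lambda>j m. klab K ((ys ! j) (progress tau' j m))) 0 phi"
      using ah ly kys unfolding ahltl_sat_def by blast
    moreover have "consE E K (\<lambda>j. (ys!j) (progress tau' j m))" for m
      unfolding consE_def using phiE[OF h] by auto
    ultimately show ?thesis by blast
  qed
  define str where "str j xi h sig = (kinit K, j \<notin> smax E K (\<lambda>k. fst (last h ! k))
      (\<lambda>k. if k < n then dK K (fst (last h ! k)) (fst ((sig ! k) (Some ()))) else kinit K))"
    for j :: nat and xi :: "unit option" and h :: "('s \<times> bool) list list" and sig :: "(unit option \<Rightarrow> 's \<times> bool) list"
  have strat: "is_strategy ?G n None (str j None)" for j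
    unfolding is_strategy_def
  proof (intro conjI allI impI)
    fix h :: "('s \<times> bool) list list" and sig :: "(unit option \<Rightarrow> 's \<times> bool) list"
    show "str j None h sig \<in> moves ?G" using wf by (simp add: str_def stut_simps kripke_wf_def)
  next
    fix h :: "('s \<times> bool) list list" and sig sig' :: "(unit option \<Rightarrow> 's \<times> bool) list"
    assume "length sig = n" "length sig' = n"
      and ag: "\<forall>j<n. \<forall>xi'\<in>agents ?G. stage ?G xi' < stage ?G None \<longrightarrow> (sig ! j) xi' = (sig' ! j) xi'"
    then have "\<forall>j<n. (sig ! j) (Some ()) = (sig' ! j) (Some ())" by (simp add: stut_simps)
    then have "(\<lambda>k. if k < n then dK K (fst (last h ! k)) (fst ((sig ! k) (Some ()))) else kinit K) =
               (\<lambda>k. if k < n then dK K (fst (last h ! k)) (fst ((sig' ! k) (Some ()))) else kinit K)"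
      by auto
    then show "str j None h sig = str j None h sig'" by (simp add: str_def)
  qed
  show ?thesis
    unfolding hyperatl_block_def length_replicate
  proof (intro exI[of _ str] conjI allI impI ballI)
    fix j and xi :: "unit option" assume "j < n" "xi \<in> replicate n {None} ! j"
    then show "is_strategy ?G n xi (str j xi)" using strat by simp
  next
    fix u assume outc: "is_outcome ?G (replicate n {None}) str u"
    have u0: "u 0 = replicate n (kinit K, False)" using outc by (simp add: is_outcome_def stut_simps)
    have "\<forall>i. \<exists>sig. length (u (Suc i)) = n \<and> length sig = n \<and>
             (\<forall>j<n. u (Suc i) ! j = delta ?G (u i ! j) (sig ! j)) \<and>
             (\<forall>j<n. (sig ! j) None = str j None (map u [0..<Suc i]) sig)"
      using outc unfolding is_outcome_def Let_def length_replicate by fastforce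
    then obtain sigf where sigf: "\<And>i. length (u (Suc i)) = n \<and> length (sigf i) = n \<and>
             (\<forall>j<n. u (Suc i) ! j = delta ?G (u i ! j) (sigf i ! j)) \<and>
             (\<forall>j<n. (sigf i ! j) None = str j None (map u [0..<Suc i]) (sigf i))" by metis
    have lu: "length (u i) = n" for i using sigf u0 by (cases i) auto
    define cur where "cur i k = fst (u i ! k)" for i k
    define prp where "prp i k = (if k < n then dK K (cur i k) (fst ((sigf i ! k) (Some ()))) else kinit K)" for i k
    define tau where "tau m = {j. j < n \<and> j \<in> smax E K (cur m) (prp m)}" for m
    have lastu: "last (map u [0..<Suc i]) = u i" for i by simp
    have bitS: "j < n \<Longrightarrow> snd ((sigf i ! j) None) = (j \<notin> tau i)" for i j
    proof -
      assume j: "j < n"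
      have e1: "(\<lambda>k. fst (last (map u [0..<Suc i]) ! k)) = cur i" by (simp add: cur_def fun_eq_iff)
      have e2: "(\<lambda>k. if k < n then dK K (fst (last (map u [0..<Suc i]) ! k)) (fst ((sigf i ! k) (Some ()))) else kinit K) = prp i"
        by (simp add: prp_def cur_def fun_eq_iff)
      have "(sigf i ! j) None = str j None (map u [0..<Suc i]) (sigf i)" using sigf[of i] j by blast
      then have "snd ((sigf i ! j) None) = (j \<notin> smax E K (cur i) (prp i))"
        unfolding str_def e1 e2 by simp
      then show ?thesis using j by (simp add: tau_def)
    qed
    have uS: "j < n \<Longrightarrow> u (Suc i) ! j = (if j \<in> tau i then (prp i j, False) else (cur i j, True))" for i j
      using sigf[of i] bitS[of j i] by (simp add: stut_simps prp_def cur_def)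
    have cS: "j < n \<Longrightarrow> cur (Suc i) j = (if j \<in> tau i then prp i j else cur i j)" for i j
      using uS by (simp add: cur_def)
    have c0: "j < n \<Longrightarrow> cur 0 j = kinit K" for j by (simp add: cur_def u0)
    have cst: "j < n \<Longrightarrow> cur i j \<in> kstates K" for i j
    proof (induction i)
      case 0 then show ?case using wf c0 by (simp add: kripke_wf_def)
    next
      case (Suc i)
      then have "krel K (cur i j) (prp i j)" using dK_krel[OF wf] by (simp add: prp_def)
      then show ?case using cS[OF Suc.prems] Suc krel_states[OF wf] by auto
    qed
    have kr: "j < n \<Longrightarrow> krel K (cur i j) (prp i j)" for i j
      using dK_krel[OF wf cst] by (simp add: prp_def)
    have cc: "consE E K (cur m)" for m
    proof (induction m)
      case 0 then show ?case using En c0 by (fastforce simp: consE_def)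
    next
      case (Suc m)
      have "consE E K (post (smax E K (cur m) (prp m)) (cur m) (prp m))" by (rule smax_valid[OF Suc])
      moreover have "consE E K (post (smax E K (cur m) (prp m)) (cur m) (prp m)) = consE E K (cur (Suc m))"
        by (rule consE_cong[OF En]) (simp add: post_def cS tau_def)
      ultimately show ?case by simp
    qed
    have fair: "\<forall>j<n. \<exists>\<^sub>\<infinity>m. j \<in> tau m"
      by (rule greedy_fair[OF wf En AH tau_def c0 cS kr cc]) auto
    define pos where "pos j m = progress tau j m" for j m
    have sp: "stepf (pos j)" for j unfolding pos_def by (rule stepf_progress)
    have posS: "pos j (Suc m) = (if j \<in> tau m then Suc (pos j m) else pos j m)" for j m
      by (simp add: pos_def progress_Suc)
    have ub: "j < n \<Longrightarrow> \<forall>r. \<exists>m. r \<le> pos j m" for j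
      unfolding pos_def using progress_unbounded fair by blast
    have "\<forall>j. \<exists>y. j < n \<longrightarrow> kpath K y \<and> (\<forall>m. cur m j = y (pos j m))"
    proof
      fix j show "\<exists>y. j < n \<longrightarrow> kpath K y \<and> (\<forall>m. cur m j = y (pos j m))"
      proof (cases "j < n")
        case False then show ?thesis by simp
      next
        case j: True
        have mv: "krel K (cur m j) (cur (Suc m) j)" if "pos j (Suc m) = Suc (pos j m)" for m
        proof -
          have "j \<in> tau m" using that posS[of j m] by (auto split: if_splits)
          then show ?thesis using cS[OF j] kr[OF j] by simp
        qed
        have st: "cur (Suc m) j = cur m j" if "pos j (Suc m) = pos j m" for m
        proof -
          have "j \<notin> tau m" using that posS[of j m] by (auto split: if_splits)
          then show ?thesis using cS[OF j] by simp
        qed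
        obtain y where "kpath K y \<and> (\<forall>m. cur m j = y (pos j m))"
          using mk_path[OF sp ub[OF j] c0[OF j] mv st] by blast
        then show ?thesis by blast
      qed
    qed
    then obtain yf where yf: "\<And>j. j < n \<Longrightarrow> kpath K (yf j) \<and> (\<forall>m. cur m j = yf j (pos j m))" by metis
    define ys where "ys = map yf [0..<n]"
    have ysj: "j < n \<Longrightarrow> ys ! j = yf j" for j by (simp add: ys_def)
    obtain tau' where ft: "fair_traj n tau'"
      and h': "hsat (\<lambda>j m. klab K ((ys ! j) (progress tau' j m))) 0 phi"
    proof -
      have lys: "length ys = n" by (simp add: ys_def)
      have kys: "\<And>j. j < n \<Longrightarrow> kpath K (ys ! j)" using yf ysj by simp
      show ?thesis using ah[unfolded ahltl_sat_def, rule_format, OF lys kys] that by blast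
    qed
    define w where "w j m = klab K (cur m j)" for j m
    define w' where "w' j m = klab K ((ys ! j) (progress tau' j m))" for j m
    have hc: "c \<in> set cs \<Longrightarrow> hsat w 0 c" for c
    proof -
      assume c: "c \<in> set cs"
      have hc': "hsat w' 0 c" using h' c phics by (simp add: hsat_conj_list w'_def[abs_def])
      from csk c have "eq_formula c \<or> stutter_inv_single c" by blast
      then show ?thesis
      proof
        assume "eq_formula c"
        then obtain as x y where cdef: "c = Glob (conj_list (map (\<lambda>a. Iff (Prop a x) (Prop a y)) as))"
          unfolding eq_formula_def by blast
        have "(a, x, y) \<in> E" if "a \<in> set as" for a using that c cdef by (auto simp: E_def)
        then show ?thesis using cc unfolding cdef hsat_eqf consE_def w_def by fastforce
      next
        assume "stutter_inv_single c"
        then obtain k where vk: "vars c \<subseteq> {k}"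
          and si: "\<forall>w w'. stutter_equiv (w k) (w' k) \<longrightarrow> (hsat w 0 c \<longleftrightarrow> hsat w' 0 c)"
          unfolding stutter_inv_single_def by blast
        show ?thesis
        proof (cases "k < n")
          case False
          then have "vars c = {}" using vk vc[OF c] by auto
          then show ?thesis using hc' hsat_cong[of c w w'] by simp
        next
          case True
          have ub': "\<forall>r. \<exists>m. r \<le> progress tau' k m"
            using progress_unbounded ft True by (auto simp: fair_traj_def)
          have "stutter_equiv (\<lambda>m. klab K (yf k (pos k m))) (\<lambda>m. klab K (yf k (progress tau' k m)))"
            by (rule stutter_equiv_stepf[OF sp ub[OF True] stepf_progress ub'])
          moreover have "w k = (\<lambda>m. klab K (yf k (pos k m)))" using yf[OF True] by (simp add: w_def fun_eq_iff)
          moreover have "w' k = (\<lambda>m. klab K (yf k (progress tau' k m)))" using ysj[OF True] by (simp add: w'_def fun_eq_iff)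
          ultimately have "stutter_equiv (w k) (w' k)" by simp
          then show ?thesis using si hc' by blast
        qed
      qed
    qed
    have p1: "hsat (\<lambda>j i. lab ?G (u i ! j)) 0 (map_hltl Some phi)"
    proof -
      have "(\<lambda>j k. Some -` lab ?G (u k ! j)) = w" by (auto simp: fun_eq_iff w_def cur_def stut_simps)
      moreover have "hsat w 0 phi" using hc phics by (simp add: hsat_conj_list)
      ultimately show ?thesis by (simp add: hsat_map)
    qed
    have p2: "hsat (\<lambda>j i. lab ?G (u i ! j)) 0 (conj_list (map fair_formula [0..<n]))"
      unfolding hsat_fair_list
    proof (intro allI impI)
      fix j k assume j: "j < n"
      obtain m where m: "m \<ge> k" "j \<in> tau m" using fair j by (auto simp: INFM_nat_le)
      then have "None \<notin> lab ?G (u (Suc m) ! j)" using uS[OF j, of m] by (simp add: stut_simps)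
      then show "\<exists>l\<ge>k. None \<notin> lab ?G (u l ! j)" using m by (intro exI[of _ "Suc m"]) auto
    qed
    show "hsat (\<lambda>j i. lab ?G (u i ! j)) 0 (And (map_hltl Some phi) (conj_list (map fair_formula [0..<n])))"
      using p1 p2 by simp
  qed
qed

theorem theorem7p1:
  fixes K :: "('s, 'ap) kripke" and n :: nat and phi :: "'ap hltl"
  assumes "kripke_wf K"
    and "vars phi \<subseteq> {..<n}"
  shows "(hyperatl_block (stut (kripke_mscgs K)) (replicate n {None})
            (And (map_hltl Some phi) (conj_list (map fair_formula [0..<n])))
          \<longrightarrow> ahltl_sat K n phi)
       \<and> (admissible phi \<longrightarrow>
           (hyperatl_block (stut (kripke_mscgs K)) (replicate n {None})
              (And (map_hltl Some phi) (conj_list (map fair_formula [0..<n])))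
            \<longleftrightarrow> ahltl_sat K n phi))"
  using dir1[OF assms] dir2[OF assms] by blast


end
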